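(* Let $\alpha\in[0,1)$ and let $h(z)=z+a_2z^2+\cdots$ be analytic in $\mathbb{D}=\{|z|<1\}$ and convex of order $\alpha$. Let $u(z)=h(z)+\frac{1}{2}(1-|z|^{2})\,zh'(z)$ for $z\in\mathbb{D}$. Then $u$ is univalent in $\mathbb{D}$ if $\alpha\ge 1/2$, and if $\alpha\in[0,1/2)$ then $u$ is univalent in the subdisk $|z|<r$, where $$r=\frac{-(1-\alpha)+\sqrt{(1-\alpha)^2+1-2\alpha}}{1-2\alpha}.$$
   Context: For $\alpha\in[-1/2,1)$, a locally univalent analytic function $h(z)=z+a_2z^2+\cdots$ in $\mathbb{D}$ is convex of order $\alpha$ if $\operatorname{Re}\big(1+zh''(z)/h'(z)\big)>\alpha$ for all $z\in\mathbb{D}$. *)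

theory Defs
  imports "HOL-Complex_Analysis.Complex_Analysis"
begin

definition convex_of_order :: "real \<Rightarrow> (complex \<Rightarrow> complex) \<Rightarrow> bool" where
  "convex_of_order \<alpha> h \<longleftrightarrow>
     h holomorphic_on ball 0 1 \<and> h 0 = 0 \<and> deriv h 0 = 1 \<and>
     (\<forall>z\<in>ball 0 1. deriv h z \<noteq> 0) \<and>
     (\<forall>z\<in>ball 0 1. Re (1 + z * deriv (deriv h) z / deriv h z) > \<alpha>)"

end

theory Submission
  imports Defs
begin


lemma vd_Re:
  assumes "(f has_vector_derivative f') F"
  shows "((\<lambda>x. Re (f x)) has_real_derivative Re f') F"
proof -
  have "((\<lambda>x. Re (f x)) has_derivative (\<lambda>x. Re (x *\<^sub>R f'))) F"
    using bounded_linear.has_derivative[OF bounded_linear_Re assms[unfolded has_vector_derivative_def]] .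
  moreover have e: "(*) (Re f') = (\<lambda>x. x * Re f')" by (auto simp: fun_eq_iff)
  ultimately show ?thesis unfolding has_field_derivative_def e by simp
qed

lemma aux_div: "b \<noteq> 0 \<Longrightarrow> (a::complex) / b * (c * b) = c * a" by (simp add: field_simps)
lemma aux_inv: "c \<noteq> 0 \<Longrightarrow> (c::complex) * a * inverse c = a" by (simp add: field_simps)

locale cvx =
  fixes h :: "complex \<Rightarrow> complex"
  assumes hol: "h holomorphic_on ball 0 1"
    and nz: "\<And>z. z \<in> ball 0 1 \<Longrightarrow> deriv h z \<noteq> 0"
    and pos: "\<And>z. z \<in> ball 0 1 \<Longrightarrow> 0 < Re (1 + z * deriv (deriv h) z / deriv h z)"
begin

definition "p z = 1 + z * deriv (deriv h) z / deriv h z"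

lemma h1hol: "deriv h holomorphic_on ball 0 1" by (rule holomorphic_deriv[OF hol open_ball])
lemma h2hol: "deriv (deriv h) holomorphic_on ball 0 1" by (rule holomorphic_deriv[OF h1hol open_ball])
lemma hD: "z \<in> ball 0 1 \<Longrightarrow> (h has_field_derivative deriv h z) (at z)"
  by (rule holomorphic_derivI[OF hol open_ball])
lemma h1D: "z \<in> ball 0 1 \<Longrightarrow> (deriv h has_field_derivative deriv (deriv h) z) (at z)"
  by (rule holomorphic_derivI[OF h1hol open_ball])
lemma phol: "p holomorphic_on ball 0 1"
  unfolding p_def[abs_def] using h1hol h2hol nz by (auto intro!: holomorphic_intros)
lemma p0: "p 0 = 1" by (simp add: p_def)
lemma ppos: "z \<in> ball 0 1 \<Longrightarrow> 0 < Re (p z)" using pos by (simp add: p_def)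

lemma mean:
  assumes "cmod z0 = R" "0 < R" "R < 1"
  shows "((\<lambda>t. p (z0 * exp (2 * of_real pi * \<i> * of_real t))) has_integral 1) {0..1}"
proof -
  define f where "f = (\<lambda>u. p (z0 / of_real R * u))"
  have fh: "f holomorphic_on cball 0 R"
    unfolding f_def
  proof (rule holomorphic_on_compose_gen[of "\<lambda>u. z0 / of_real R * u" _ p "ball 0 1", unfolded o_def])
    show "(*) (z0 / complex_of_real R) holomorphic_on cball 0 R" by (intro holomorphic_intros)
    show "p holomorphic_on ball 0 1" by (rule phol)
    show "(*) (z0 / complex_of_real R) ` cball 0 R \<subseteq> ball 0 1"
      using assms by (auto simp: norm_mult norm_divide)
  qed
  have "((\<lambda>u. f u / (u - 0)) has_contour_integral 2 * of_real pi * \<i> * f 0) (circlepath 0 R)"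
    using Cauchy_integral_circlepath_simple[OF fh, of 0] assms by simp
  then have I1: "((\<lambda>x. f (circlepath 0 R x) / (circlepath 0 R x - 0) * vector_derivative (circlepath 0 R) (at x within {0..1}))
      has_integral 2 * of_real pi * \<i> * f 0) {0..1}"
    by (simp add: has_contour_integral_def)
  have EQ: "f (circlepath 0 R x) / (circlepath 0 R x - 0) * vector_derivative (circlepath 0 R) (at x within {0..1})
      = 2 * of_real pi * \<i> * p (z0 * exp (2 * of_real pi * \<i> * of_real x))" if "x \<in> {0..1}" for x
  proof -
    define E where "E = exp (2 * complex_of_real pi * \<i> * complex_of_real x)"
    have vd: "vector_derivative (circlepath 0 R) (at x within {0..1}) = complex_of_real (2 * pi) * \<i> * complex_of_real R * E"
      using that unfolding E_def by (intro vector_derivative_circlepath01) auto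
    have c: "circlepath 0 R x = complex_of_real R * E" unfolding circlepath E_def by simp
    have m: "z0 / complex_of_real R * (complex_of_real R * E) = z0 * E" using assms by simp
    have nz: "complex_of_real R * E \<noteq> 0" using assms unfolding E_def by simp
    have "f (circlepath 0 R x) / (circlepath 0 R x - 0) * vector_derivative (circlepath 0 R) (at x within {0..1})
        = p (z0 * E) / (complex_of_real R * E) * (complex_of_real (2 * pi) * \<i> * (complex_of_real R * E))"
      unfolding vd c f_def m by (simp only: diff_zero mult.assoc)
    also have "\<dots> = 2 * of_real pi * \<i> * p (z0 * E)"
      unfolding of_real_mult of_real_numeral by (rule aux_div[OF nz])
    finally show ?thesis unfolding E_def .
  qed
  have "((\<lambda>x. 2 * of_real pi * \<i> * p (z0 * exp (2 * of_real pi * \<i> * of_real x)))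
      has_integral 2 * of_real pi * \<i> * f 0) {0..1}"
    by (rule has_integral_eq[OF EQ I1])
  then have "((\<lambda>x. 2 * of_real pi * \<i> * p (z0 * exp (2 * of_real pi * \<i> * of_real x)) * inverse (2 * of_real pi * \<i>))
      has_integral 2 * of_real pi * \<i> * f 0 * inverse (2 * of_real pi * \<i>)) {0..1}"
    by (rule has_integral_mult_left)
  moreover have cz: "2 * of_real pi * \<i> \<noteq> (0::complex)" by simp
  ultimately show ?thesis by (simp only: aux_inv[OF cz] right_inverse[OF cz] f_def p0 mult_zero_right mult_1_right)
qed

end

context cvx begin

lemma support_circle:
  assumes z0: "cmod z0 = R" and R: "0 < R" "R < 1" and z: "cmod z = R"
  shows "0 \<le> Re (cnj (z0 * deriv h z0) * (h z0 - h z))"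
proof -
  define zz where "zz = (\<lambda>t::real. z0 * exp (2 * of_real pi * \<i> * of_real t))"
  have zzn: "cmod (zz t) = R" for t
    unfolding zz_def using z0 by (simp add: norm_mult)
  have zzb: "zz t \<in> ball 0 1" for t using zzn[of t] R by simp
  have zzD: "(zz has_vector_derivative (2 * of_real pi * \<i> * zz t)) (at t)" for t
  proof -
    have "((\<lambda>x. z0 * exp (2 * of_real pi * \<i> * x)) has_field_derivative 2 * of_real pi * \<i> * zz t) (at (of_real t))"
      unfolding zz_def by (auto intro!: derivative_eq_intros simp: algebra_simps)
    from has_vector_derivative_real_field[OF this] show ?thesis unfolding zz_def by simp
  qed
  have zz0: "zz 0 = z0" and zz1: "zz 1 = z0" unfolding zz_def by simp_all
  have pc: "continuous_on UNIV (\<lambda>t. p (zz t))"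
  proof (rule continuous_on_compose2[OF holomorphic_on_imp_continuous_on[OF phol]])
    show "continuous_on UNIV zz" unfolding zz_def by (intro continuous_intros)
    show "zz ` UNIV \<subseteq> ball 0 1" using zzb by auto
  qed
  define P where "P = (\<lambda>t. integral {0..t} (\<lambda>s. p (zz s)))"
  have PD: "(P has_vector_derivative p (zz t)) (at t within {0..1})" if "t \<in> {0..1}" for t
    unfolding P_def by (rule integral_has_vector_derivative[OF continuous_on_subset[OF pc] that]) auto
  have P0: "P 0 = 0" unfolding P_def by simp
  have P1: "P 1 = 1" unfolding P_def using integral_unique[OF mean[OF z0 R]] unfolding zz_def by simp
  define q where "q = (\<lambda>t. zz t * deriv h (zz t))"
  have qD: "(q has_vector_derivative 2 * of_real pi * \<i> * p (zz t) * q t) (at t)" for t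
  proof -
    have "((\<lambda>t. deriv h (zz t)) has_vector_derivative (2 * of_real pi * \<i> * zz t) * deriv (deriv h) (zz t)) (at t)"
      using field_vector_diff_chain_at[OF zzD h1D[OF zzb]] by (simp add: o_def)
    from has_vector_derivative_mult[OF zzD this] show ?thesis
      unfolding q_def
      by (rule has_vector_derivative_eq_rhs) (use nz[OF zzb[of t]] in \<open>simp add: p_def field_simps\<close>)
  qed
  define Q where "Q = (\<lambda>t. q t * exp (- (2 * of_real pi * \<i>) * P t))"
  have QD: "(Q has_vector_derivative 0) (at t within {0..1})" if "t \<in> {0..1}" for t
  proof -
    have e: "((\<lambda>t. exp (- (2 * of_real pi * \<i>) * P t)) has_vector_derivative
        (- (2 * of_real pi * \<i>) * p (zz t)) * exp (- (2 * of_real pi * \<i>) * P t)) (at t within {0..1})"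
    proof -
      have "((\<lambda>t. - (2 * of_real pi * \<i>) * P t) has_vector_derivative - (2 * of_real pi * \<i>) * p (zz t)) (at t within {0..1})"
        by (rule has_vector_derivative_mult_right[OF PD[OF that]])
      from field_vector_diff_chain_within[OF this DERIV_exp[THEN has_field_derivative_at_within]]
      show ?thesis by (simp add: o_def)
    qed
    from has_vector_derivative_mult[OF has_vector_derivative_at_within[OF qD] e] show ?thesis
      unfolding Q_def by (rule has_vector_derivative_eq_rhs) (simp add: algebra_simps)
  qed
  obtain c where c: "\<And>t. t \<in> {0..1} \<Longrightarrow> Q t = c"
    using has_vector_derivative_zero_constant[of "{0..1}" Q] QD by auto
  have qrep: "q t = q 0 * exp (2 * of_real pi * \<i> * P t)" if "t \<in> {0..1}" for t
  proof -
    have "Q t = Q 0" using c[OF that] c[of 0] by simp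
    then have "q t * exp (- (2 * of_real pi * \<i>) * P t) = q 0" unfolding Q_def P0 by simp
    then have "q t * exp (- (2 * of_real pi * \<i>) * P t) * exp (2 * of_real pi * \<i> * P t) = q 0 * exp (2 * of_real pi * \<i> * P t)"
      by simp
    then show ?thesis by (simp add: mult.assoc exp_add[symmetric])
  qed
  define \<Theta> where "\<Theta> = (\<lambda>t. Re (P t))"
  have Pc: "continuous_on {0..1} P" using PD by (rule continuous_on_vector_derivative)
  have \<Theta>c: "continuous_on {0..1} \<Theta>" unfolding \<Theta>_def using Pc by (intro continuous_intros)
  have \<Theta>D: "(\<Theta> has_real_derivative Re (p (zz t))) (at t)" if "t \<in> {0<..<1}" for t
  proof -
    have "(P has_vector_derivative p (zz t)) (at t within {0..1})" using PD that by auto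
    moreover have "at t within {0..1} = at t"
      by (rule at_within_open_subset[of t "{0<..<1}"]) (use that in auto)
    ultimately have "(P has_vector_derivative p (zz t)) (at t)" by simp
    then show ?thesis unfolding \<Theta>_def by (rule vd_Re)
  qed
  have \<Theta>mono: "\<Theta> a \<le> \<Theta> b" if "0 \<le> a" "a \<le> b" "b \<le> 1" for a b
  proof (rule DERIV_nonneg_imp_increasing_open[OF that(2)])
    fix x assume "a < x" "x < b"
    then show "\<exists>y. (\<Theta> has_real_derivative y) (at x) \<and> 0 \<le> y"
      using \<Theta>D[of x] ppos[OF zzb[of x]] that by (intro exI[of _ "Re (p (zz x))"]) auto
  next
    show "continuous_on {a..b} \<Theta>" using \<Theta>c by (rule continuous_on_subset) (use that in auto)
  qed
  have \<Theta>0: "\<Theta> 0 = 0" and \<Theta>1: "\<Theta> 1 = 1" unfolding \<Theta>_def using P0 P1 by auto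
  define F where "F = (\<lambda>s. Re (cnj (q 0) * (h z0 - h (zz s))))"
  have CD: "((\<lambda>s. h (zz s)) has_vector_derivative 2 * of_real pi * \<i> * q s) (at s)" for s
    using field_vector_diff_chain_at[OF zzD hD[OF zzb]] unfolding q_def by (simp add: o_def algebra_simps)
  have FD: "(F has_real_derivative Re (cnj (q 0) * (0 - 2 * of_real pi * \<i> * q s))) (at s)" for s
    unfolding F_def
    by (intro vd_Re has_vector_derivative_mult_right has_vector_derivative_diff has_vector_derivative_const CD)
  have Fval: "Re (cnj (q 0) * (0 - 2 * of_real pi * \<i> * q s)) =
     (2 * pi * (cmod (q 0))\<^sup>2 * exp (- 2 * pi * Im (P s))) * sin (2 * pi * \<Theta> s)" if "s \<in> {0..1}" for s
  proof -
    define E where "E = exp (2 * of_real pi * \<i> * P s)"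
    define r where "r = (cmod (q 0))\<^sup>2"
    have cn: "cnj (q 0) * q 0 = of_real r" unfolding r_def by (subst complex_norm_square) (rule mult.commute)
    have "cnj (q 0) * (0 - 2 * of_real pi * \<i> * q s) = cnj (q 0) * (0 - 2 * of_real pi * \<i> * (q 0 * E))"
      using qrep[OF that] unfolding E_def by simp
    also have "\<dots> = - (2 * of_real pi * \<i>) * (cnj (q 0) * q 0) * E" by (simp add: algebra_simps)
    also have "\<dots> = - (2 * of_real pi * \<i>) * of_real r * E" unfolding cn ..
    finally have X: "cnj (q 0) * (0 - 2 * of_real pi * \<i> * q s) = - (2 * of_real pi * \<i>) * of_real r * E" .
    have "Re (cnj (q 0) * (0 - 2 * of_real pi * \<i> * q s)) = 2 * pi * r * Im E" unfolding X by simp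
    then have "Re (cnj (q 0) * (0 - 2 * of_real pi * \<i> * q s)) = 2 * pi * (cmod (q 0))\<^sup>2 * Im (exp (2 * of_real pi * \<i> * P s))"
      unfolding r_def E_def .
    also have "Im (exp (2 * of_real pi * \<i> * P s)) = exp (- 2 * pi * Im (P s)) * sin (2 * pi * \<Theta> s)"
      unfolding Im_exp \<Theta>_def by simp
    finally show ?thesis by simp
  qed
  have Fc: "continuous_on A F" for A
    using FD by (meson DERIV_isCont continuous_at_imp_continuous_on)
  have F0: "F 0 = 0" and F1: "F 1 = 0" unfolding F_def zz0 zz1 by simp_all
  have Fs: "0 \<le> F s" if s: "s \<in> {0..1}" for s
  proof (cases "\<Theta> s \<le> 1/2")
    case True
    have "F 0 \<le> F s"
    proof (rule DERIV_nonneg_imp_increasing_open[of 0 s F])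
      show "0 \<le> s" using s by auto
      show "continuous_on {0..s} F" by (rule Fc)
      fix x assume x: "0 < x" "x < s"
      have "0 \<le> \<Theta> x" using \<Theta>mono[of 0 x] \<Theta>0 x s by auto
      moreover have "\<Theta> x \<le> 1/2" using \<Theta>mono[of x s] True x s by auto
      ultimately have "0 \<le> sin (2 * pi * \<Theta> x)" by (intro sin_ge_zero) auto
      then have "0 \<le> (2 * pi * (cmod (q 0))\<^sup>2 * exp (- 2 * pi * Im (P x))) * sin (2 * pi * \<Theta> x)" by simp
      then show "\<exists>y. (F has_real_derivative y) (at x) \<and> 0 \<le> y"
        using FD[of x] Fval[of x] x s by auto
    qed
    then show ?thesis using F0 by simp
  next
    case False
    have "F 1 \<le> F s"
    proof (rule DERIV_nonpos_imp_decreasing_open[of s 1 F])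
      show "s \<le> 1" using s by auto
      show "continuous_on {s..1} F" by (rule Fc)
      fix x assume x: "s < x" "x < 1"
      have "\<Theta> x \<le> 1" using \<Theta>mono[of x 1] \<Theta>1 x s by auto
      moreover have "1/2 \<le> \<Theta> x" using \<Theta>mono[of s x] False x s by auto
      ultimately have "sin (2 * pi * \<Theta> x) \<le> 0"
      proof (cases "\<Theta> x = 1")
        case True then show ?thesis by simp
      next
        case False
        with \<open>\<Theta> x \<le> 1\<close> \<open>1/2 \<le> \<Theta> x\<close> show ?thesis by (intro sin_le_zero) auto
      qed
      then have "(2 * pi * (cmod (q 0))\<^sup>2 * exp (- 2 * pi * Im (P x))) * sin (2 * pi * \<Theta> x) \<le> 0"
        by (simp add: mult_nonneg_nonpos)
      then show "\<exists>y. (F has_real_derivative y) (at x) \<and> y \<le> 0"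
        using FD[of x] Fval[of x] x s by auto
    qed
    then show ?thesis using F1 by simp
  qed
  obtain s where s: "s \<in> {0..1}" "zz s = z"
  proof -
    define a where "a = Arg2pi (z / z0)"
    have z0nz: "z0 \<noteq> 0" using z0 R by auto
    have "cmod (z / z0) = 1" using z z0 R by (simp add: norm_divide)
    then have "z / z0 = exp (\<i> * of_real a)" using Arg2pi_eq[of "z / z0"] unfolding a_def by simp
    then have "z = z0 * exp (\<i> * of_real a)" using z0nz by (simp add: field_simps)
    moreover have "0 \<le> a" "a < 2 * pi" unfolding a_def by (auto intro: Arg2pi_ge_0 Arg2pi_lt_2pi)
    ultimately show ?thesis
      by (intro that[of "a / (2 * pi)"]) (auto simp: zz_def field_simps)
  qed
  have "0 \<le> F s" by (rule Fs[OF s(1)])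
  then show ?thesis unfolding F_def s(2) q_def zz0 .
qed

end

context cvx begin

lemma support_inside:
  assumes z0: "cmod z0 = R" and R: "0 < R" "R < 1" and z: "cmod z < R"
  shows "0 < Re (cnj (z0 * deriv h z0) * (h z0 - h z))"
proof -
  define k where "k = cnj (z0 * deriv h z0)"
  have z0b: "z0 \<in> ball 0 1" using z0 R by simp
  have knz: "k \<noteq> 0" unfolding k_def using nz[OF z0b] z0 R by auto
  define E where "E = (\<lambda>w. exp (k * (h w - h z0)))"
  have Eabs: "cmod (E w) = exp (- Re (k * (h z0 - h w)))" for w
    unfolding E_def norm_exp_eq_Re by (simp add: algebra_simps)
  have Ehol: "E holomorphic_on ball 0 1" unfolding E_def using hol by (intro holomorphic_intros)
  have sub: "cball 0 R \<subseteq> ball 0 1" using R by auto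
  have le: "cmod (E w) \<le> 1" if "w \<in> ball 0 R" for w
  proof (rule maximum_modulus_frontier[of E "ball 0 R"])
    show "E holomorphic_on interior (ball 0 R)"
      using Ehol by (rule holomorphic_on_subset) (use sub in auto)
    show "continuous_on (closure (ball 0 R)) E"
      using holomorphic_on_imp_continuous_on[OF Ehol] closure_ball[OF R(1)] sub
      by (metis continuous_on_subset)
    show "bounded (ball (0::complex) R)" by simp
    show "w \<in> ball 0 R" by (rule that)
    fix x :: complex assume "x \<in> frontier (ball 0 R)"
    then have "cmod x = R" using frontier_ball[OF R(1), of 0] by auto
    from support_circle[OF z0 R this] have "0 \<le> Re (k * (h z0 - h x))" unfolding k_def .
    then show "cmod (E x) \<le> 1" unfolding Eabs by simp
  qed
  have zb: "z \<in> ball 0 R" using z by simp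
  have nn: "0 \<le> Re (k * (h z0 - h z))"
    using le[OF zb] unfolding Eabs by simp
  show ?thesis
  proof (rule ccontr)
    assume "\<not> ?thesis"
    then have eq0: "Re (k * (h z0 - h z)) = 0" using nn unfolding k_def by simp
    have "E constant_on ball 0 R"
    proof (rule maximum_modulus_principle[of E "ball 0 R" "ball 0 R" z])
      show "E holomorphic_on ball 0 R" using Ehol by (rule holomorphic_on_subset) (use sub in auto)
      fix w :: complex assume "w \<in> ball 0 R"
      then show "cmod (E w) \<le> cmod (E z)" using le[of w] unfolding Eabs eq0 by simp
    qed (use zb in auto)
    then obtain c where c: "\<And>w. w \<in> ball 0 R \<Longrightarrow> E w = c" unfolding constant_on_def by blast
    have d0: "(E has_field_derivative 0) (at z)"
      by (rule has_field_derivative_transform_within_open[of "\<lambda>_. c" 0 z "ball 0 R"])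
         (use zb c in \<open>auto intro: derivative_eq_intros\<close>)
    have zb1: "z \<in> ball 0 1" using z R by simp
    have d1: "(E has_field_derivative k * deriv h z * E z) (at z)"
      unfolding E_def by (auto intro!: derivative_eq_intros hD[OF zb1])
    have "k * deriv h z * E z = 0" using DERIV_unique[OF d1 d0] .
    moreover have "E z \<noteq> 0" unfolding E_def by simp
    ultimately show False using knz nz[OF zb1] by simp
  qed
qed

end

lemma aux_ln: "A \<noteq> 0 \<Longrightarrow> B \<noteq> 0 \<Longrightarrow>
  (A * ((c * A) * (- (inverse B ^ Suc (Suc 0)))) + c * P * A * inverse B) * inverse (A * inverse B) = c * P - c * A / (B::complex)"
  by (simp add: field_simps power2_eq_square)

context cvx begin

lemma wind:
  assumes R: "0 < R" "R < 1"
    and w: "\<And>z0. cmod z0 = R \<Longrightarrow> 0 < Re (cnj (z0 * deriv h z0) * (h z0 - w))"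
  shows "((\<lambda>z. deriv h z / (h z - w)) has_contour_integral 2 * of_real pi * \<i>) (circlepath 0 R)"
proof -
  define zz where "zz = (\<lambda>t::real. of_real R * exp (2 * of_real pi * \<i> * of_real t))"
  have zzc: "circlepath 0 R = zz" unfolding zz_def circlepath by simp
  have zzn: "cmod (zz t) = R" for t
    unfolding zz_def using R by (simp add: norm_mult)
  have zzb: "zz t \<in> ball 0 1" for t using zzn[of t] R by simp
  have zzD: "(zz has_vector_derivative (2 * of_real pi * \<i> * zz t)) (at t)" for t
  proof -
    have "((\<lambda>x. of_real R * exp (2 * of_real pi * \<i> * x)) has_field_derivative 2 * of_real pi * \<i> * zz t) (at (of_real t))"
      unfolding zz_def by (auto intro!: derivative_eq_intros simp: algebra_simps)
    from has_vector_derivative_real_field[OF this] show ?thesis unfolding zz_def by simp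
  qed
  have zz0: "zz 0 = of_real R" and zz1: "zz 1 = of_real R" unfolding zz_def by simp_all
  define q where "q = (\<lambda>t. zz t * deriv h (zz t))"
  have qD: "(q has_vector_derivative 2 * of_real pi * \<i> * p (zz t) * q t) (at t)" for t
  proof -
    have "((\<lambda>t. deriv h (zz t)) has_vector_derivative (2 * of_real pi * \<i> * zz t) * deriv (deriv h) (zz t)) (at t)"
      using field_vector_diff_chain_at[OF zzD h1D[OF zzb]] by (simp add: o_def)
    from has_vector_derivative_mult[OF zzD this] show ?thesis
      unfolding q_def
      by (rule has_vector_derivative_eq_rhs) (use nz[OF zzb[of t]] in \<open>simp add: p_def field_simps\<close>)
  qed
  have CD: "((\<lambda>s. h (zz s) - w) has_vector_derivative 2 * of_real pi * \<i> * q s) (at s)" for s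
    using field_vector_diff_chain_at[OF zzD hD[OF zzb]] unfolding q_def has_vector_derivative_diff_const
    by (simp add: o_def algebra_simps)
  have pos_t: "0 < Re (cnj (q t) * (h (zz t) - w))" for t
    using w[OF zzn[of t]] unfolding q_def .
  have Bnz: "h (zz t) - w \<noteq> 0" for t using pos_t[of t] by auto
  have qnz: "q t \<noteq> 0" for t
    unfolding q_def using nz[OF zzb[of t]] zzn[of t] R by auto
  define \<rho> where "\<rho> = (\<lambda>t. q t * inverse (h (zz t) - w))"
  have \<rho>re: "0 < Re (\<rho> t)" for t
  proof -
    have "Re (\<rho> t) = Re (cnj (q t) * (h (zz t) - w)) / (cmod (h (zz t) - w))\<^sup>2"
      unfolding \<rho>_def by (simp add: Re_divide' divide_inverse[symmetric] algebra_simps)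
    then show ?thesis using pos_t[of t] Bnz[of t] by simp
  qed
  have \<rho>nn: "\<rho> t \<notin> \<real>\<^sub>\<le>\<^sub>0" for t using \<rho>re[of t] by (auto simp: complex_nonpos_Reals_iff)
  define G' where "G' = (\<lambda>t. 2 * of_real pi * \<i> * p (zz t) - 2 * of_real pi * \<i> * q t / (h (zz t) - w))"
  have GD: "((\<lambda>t. Ln (\<rho> t)) has_vector_derivative G' t) (at t)" for t
  proof -
    have iD: "((\<lambda>s. inverse (h (zz s) - w)) has_vector_derivative
        (2 * of_real pi * \<i> * q t) * (- (inverse (h (zz t) - w) ^ Suc (Suc 0)))) (at t)"
      using field_vector_diff_chain_at[OF CD DERIV_inverse[OF Bnz[of t]]] by (simp add: o_def)
    have \<rho>D: "(\<rho> has_vector_derivative q t * ((2 * of_real pi * \<i> * q t) * (- (inverse (h (zz t) - w) ^ Suc (Suc 0))))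
        + 2 * of_real pi * \<i> * p (zz t) * q t * inverse (h (zz t) - w)) (at t)"
      unfolding \<rho>_def by (rule has_vector_derivative_mult[OF qD iD])
    from field_vector_diff_chain_at[OF \<rho>D has_field_derivative_Ln[OF \<rho>nn[of t]]]
    have "((\<lambda>t. Ln (\<rho> t)) has_vector_derivative (q t * ((2 * of_real pi * \<i> * q t) * (- (inverse (h (zz t) - w) ^ Suc (Suc 0))))
        + 2 * of_real pi * \<i> * p (zz t) * q t * inverse (h (zz t) - w)) * inverse (\<rho> t)) (at t)"
      unfolding comp_def .
    then show ?thesis
      by (rule has_vector_derivative_eq_rhs) (unfold G'_def \<rho>_def, rule aux_ln[OF qnz Bnz])
  qed
  have G01: "Ln (\<rho> 1) - Ln (\<rho> 0) = 0" unfolding \<rho>_def q_def zz0 zz1 by simp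
  have I1: "(G' has_integral 0) {0..1}"
    using fundamental_theorem_of_calculus[of 0 1 "\<lambda>t. Ln (\<rho> t)" G'] GD
    unfolding G01 by (auto intro: has_vector_derivative_at_within)
  have I2: "((\<lambda>t. 2 * of_real pi * \<i> * p (zz t)) has_integral 2 * of_real pi * \<i> * 1) {0..1}"
    using has_integral_mult_right[OF mean[of "of_real R" R]] R unfolding zz_def by simp
  have I3: "((\<lambda>t. 2 * of_real pi * \<i> * p (zz t) - G' t) has_integral 2 * of_real pi * \<i> * 1 - 0) {0..1}"
    by (rule has_integral_diff[OF I2 I1])
  have EQ: "2 * of_real pi * \<i> * p (zz t) - G' t =
      deriv h (circlepath 0 R t) / (h (circlepath 0 R t) - w) * vector_derivative (circlepath 0 R) (at t within {0..1})"
    if "t \<in> {0..1}" for t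
  proof -
    have "vector_derivative (circlepath 0 R) (at t within {0..1}) = 2 * of_real pi * \<i> * zz t"
      using that by (subst vector_derivative_circlepath01) (auto simp: zz_def circlepath)
    then show ?thesis unfolding zzc G'_def q_def by simp
  qed
  have "((\<lambda>t. deriv h (circlepath 0 R t) / (h (circlepath 0 R t) - w) * vector_derivative (circlepath 0 R) (at t within {0..1}))
     has_integral 2 * of_real pi * \<i>) {0..1}"
    using has_integral_eq[OF EQ I3] by simp
  then show ?thesis unfolding has_contour_integral_def .
qed

end

context cvx begin

lemma count_one:
  assumes R: "0 < R" "R < 1"
    and w: "\<And>z0. cmod z0 = R \<Longrightarrow> 0 < Re (cnj (z0 * deriv h z0) * (h z0 - w))"
  shows "card {z \<in> ball 0 R. h z = w} = 1"
proof -
  define R1 where "R1 = (1 + R) / 2"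
  have R1: "R < R1" "R1 < 1" unfolding R1_def using R by auto
  define f where "f = (\<lambda>z. h z - w)"
  define pz where "pz = {z \<in> ball 0 R1. f z = 0 \<or> z \<in> {}}"
  have fhol1: "f holomorphic_on ball 0 1" unfolding f_def using hol by (intro holomorphic_intros)
  have fhol: "f holomorphic_on ball 0 R1 - {}"
    using fhol1 by (rule holomorphic_on_subset) (use R1 in auto)
  have fD: "(f has_field_derivative deriv h z) (at z)" if "z \<in> ball 0 1" for z
    unfolding f_def using hD[OF that] by (auto intro!: derivative_eq_intros)
  have df: "deriv f z = deriv h z" if "z \<in> ball 0 1" for z
    using DERIV_imp_deriv[OF fD[OF that]] .
  have nconst: "\<not> f constant_on ball 0 1"
  proof
    assume "f constant_on ball 0 1"
    then obtain c where c: "\<And>z. z \<in> ball 0 1 \<Longrightarrow> f z = c" unfolding constant_on_def by blast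
    have "(f has_field_derivative 0) (at 0)"
      by (rule has_field_derivative_transform_within_open[of "\<lambda>_. c" 0 0 "ball 0 1"])
         (use c in \<open>auto intro: derivative_eq_intros\<close>)
    from DERIV_unique[OF fD[of 0] this] nz[of 0] show False by simp
  qed
  have fin: "finite pz"
  proof -
    have "finite {z \<in> cball 0 R1. f z = 0}"
      by (rule holomorphic_compact_finite_zeros[OF fhol1 open_ball connected_ball _ _ nconst]) (use R1 in auto)
    moreover have "pz \<subseteq> {z \<in> cball 0 R1. f z = 0}" unfolding pz_def by auto
    ultimately show ?thesis by (rule finite_subset[rotated])
  qed
  have sph: "f z \<noteq> 0" if "cmod z = R" for z using w[OF that] unfolding f_def by auto
  have pimg: "path_image (circlepath 0 R) \<subseteq> ball 0 R1 - pz"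
    using R R1 sph unfolding path_image_circlepath_nonneg[OF less_imp_le[OF R(1)]] pz_def by auto
  have homo: "\<forall>z. z \<notin> ball 0 R1 \<longrightarrow> winding_number (circlepath 0 R) z = 0"
  proof (intro allI impI)
    fix z :: complex assume "z \<notin> ball 0 R1"
    then show "winding_number (circlepath 0 R) z = 0"
      using R R1 by (intro winding_number_zero_outside[of _ "cball 0 R"])
         (auto simp: path_image_circlepath_nonneg)
  qed
  have AP: "contour_integral (circlepath 0 R) (\<lambda>x. deriv f x * 1 / f x) =
      2 * pi * \<i> * (\<Sum>p\<in>pz. winding_number (circlepath 0 R) p * 1 * zorder f p)"
    unfolding pz_def
    by (rule argument_principle[of "ball 0 R1" f "{}" "\<lambda>_. 1" "circlepath 0 R"])
       (use fhol pimg homo fin in \<open>auto simp: pz_def\<close>)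
  have "((\<lambda>x. deriv f x * 1 / f x) has_contour_integral 2 * of_real pi * \<i>) (circlepath 0 R)"
  proof (rule has_contour_integral_eq[OF wind[OF R w]])
    fix x assume "x \<in> path_image (circlepath 0 R)"
    then have "x \<in> ball 0 1" using R unfolding path_image_circlepath_nonneg[OF less_imp_le[OF R(1)]] by auto
    then show "deriv h x / (h x - w) = deriv f x * 1 / f x" using df unfolding f_def by simp
  qed
  then have LHS: "contour_integral (circlepath 0 R) (\<lambda>x. deriv f x * 1 / f x) = 2 * of_real pi * \<i>"
    by (rule contour_integral_unique)
  have trm: "winding_number (circlepath 0 R) p * 1 * of_int (zorder f p) = (if cmod p < R then 1 else 0)"
    if "p \<in> pz" for p
  proof -
    have pb: "p \<in> ball 0 1" "f p = 0" using that R1 unfolding pz_def by auto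
    have "zorder f p = 1"
      by (rule zorder_zero_eqI[OF fhol1 open_ball pb(1)]) (use pb df[OF pb(1)] nz[OF pb(1)] in auto)
    moreover have "cmod p \<noteq> R" using sph pb by auto
    moreover have "winding_number (circlepath 0 R) p = 1" if "cmod p < R"
      using winding_number_circlepath[of p 0 R] that by simp
    moreover have "winding_number (circlepath 0 R) p = 0" if "cmod p > R"
      using R by (intro winding_number_zero_outside[of _ "cball 0 R"])
         (use that in \<open>auto simp: path_image_circlepath_nonneg\<close>)
    ultimately show ?thesis by (cases "cmod p < R") auto
  qed
  have "(\<Sum>p\<in>pz. winding_number (circlepath 0 R) p * 1 * of_int (zorder f p)) = (\<Sum>p\<in>pz. if cmod p < R then 1 else 0)"
    by (rule sum.cong) (use trm in auto)
  also have "\<dots> = (\<Sum>p\<in>{p\<in>pz. cmod p < R}. 1)" using sum.inter_filter[OF fin, of "\<lambda>_. 1::complex"] by simp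
  also have "\<dots> = of_nat (card {p\<in>pz. cmod p < R})" by simp
  also have "{p\<in>pz. cmod p < R} = {z \<in> ball 0 R. h z = w}" unfolding pz_def f_def using R1 by auto
  finally have "(\<Sum>p\<in>pz. winding_number (circlepath 0 R) p * 1 * of_int (zorder f p)) = of_nat (card {z \<in> ball 0 R. h z = w})" .
  with AP LHS have "of_nat (card {z \<in> ball 0 R. h z = w}) = (1::complex)" by simp
  then show ?thesis by (metis of_nat_1 of_nat_eq_iff)
qed

lemma conv_inj:
  assumes R: "0 < R" "R < 1"
  shows "inj_on h (ball 0 R)"
    and "\<And>z1 z2 t. z1 \<in> ball 0 R \<Longrightarrow> z2 \<in> ball 0 R \<Longrightarrow> 0 \<le> t \<Longrightarrow> t \<le> 1 \<Longrightarrow>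
           \<exists>z\<in>ball 0 R. h z = (1 - of_real t) * h z1 + of_real t * h z2"
proof -
  have key: "0 < Re (cnj (z0 * deriv h z0) * (h z0 - ((1 - of_real t) * h z1 + of_real t * h z2)))"
    if "z1 \<in> ball 0 R" "z2 \<in> ball 0 R" "0 \<le> t" "t \<le> 1" "cmod z0 = R" for z1 z2 t z0
  proof -
    define k where "k = cnj (z0 * deriv h z0)"
    have a: "0 < Re (k * (h z0 - h z1))" unfolding k_def using support_inside[OF that(5) R] that by auto
    have b: "0 < Re (k * (h z0 - h z2))" unfolding k_def using support_inside[OF that(5) R] that by auto
    have "k * (h z0 - ((1 - of_real t) * h z1 + of_real t * h z2)) =
        of_real (1 - t) * (k * (h z0 - h z1)) + of_real t * (k * (h z0 - h z2))"
      by (simp add: algebra_simps)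
    then have "Re (k * (h z0 - ((1 - of_real t) * h z1 + of_real t * h z2))) =
        (1 - t) * Re (k * (h z0 - h z1)) + t * Re (k * (h z0 - h z2))" by simp
    moreover have "0 < (1 - t) * Re (k * (h z0 - h z1)) + t * Re (k * (h z0 - h z2))"
    proof (cases "t = 1")
      case True then show ?thesis using b by simp
    next
      case False
      then have "0 < (1 - t) * Re (k * (h z0 - h z1))" using a that by simp
      moreover have "0 \<le> t * Re (k * (h z0 - h z2))" using b that by simp
      ultimately show ?thesis by linarith
    qed
    ultimately show ?thesis unfolding k_def by simp
  qed
  have c1: "card {z \<in> ball 0 R. h z = (1 - of_real t) * h z1 + of_real t * h z2} = 1"
    if "z1 \<in> ball 0 R" "z2 \<in> ball 0 R" "0 \<le> t" "t \<le> 1" for z1 z2 t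
    by (rule count_one[OF R]) (use key that in auto)
  show "inj_on h (ball 0 R)"
  proof (rule inj_onI)
    fix a b assume ab: "a \<in> ball 0 R" "b \<in> ball 0 R" "h a = h b"
    have "card {z \<in> ball 0 R. h z = h a} = 1" using c1[OF ab(1) ab(1), of 0] by simp
    then obtain x where x: "{z \<in> ball 0 R. h z = h a} = {x}" by (rule card_1_singletonE)
    have "a \<in> {z \<in> ball 0 R. h z = h a}" "b \<in> {z \<in> ball 0 R. h z = h a}" using ab by auto
    then show "a = b" unfolding x by simp
  qed
  fix z1 z2 :: complex and t :: real assume that: "z1 \<in> ball 0 R" "z2 \<in> ball 0 R" "0 \<le> t" "t \<le> 1"
  from c1[OF that] have "{z \<in> ball 0 R. h z = (1 - of_real t) * h z1 + of_real t * h z2} \<noteq> {}"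
    by (metis card.empty zero_neq_one)
  then show "\<exists>z\<in>ball 0 R. h z = (1 - of_real t) * h z1 + of_real t * h z2" by blast
qed

end


lemma key_ineq:
  fixes G c a b :: complex
  assumes a: "a \<noteq> 0" and c: "c \<noteq> 0" and G: "cmod G < 1" and P: "0 < Re (1 + G * b / a)"
  defines "d \<equiv> c * inverse a"
  shows "0 < Re (cnj c * (d * a + inverse 2 * ((1 - G * cnj G) * (G * (d * b) + d * a)
           + (0 - (G * cnj d + d * cnj G)) * (G * a))))"
proof -
  define N' where "N' = G * cnj d + d * cnj G"
  define Pp where "Pp = 1 + G * b / a"
  have da: "d * a = c" unfolding d_def using a by simp
  have X: "d * a + inverse 2 * ((1 - G * cnj G) * (G * (d * b) + d * a) + (0 - N') * (G * a))
      = c + inverse 2 * (1 - G * cnj G) * c * Pp - inverse 2 * N' * (G * a)"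
    unfolding Pp_def d_def using a by (simp add: field_simps)
  have gg: "G * cnj G = of_real ((cmod G)\<^sup>2)" by (rule complex_norm_square[symmetric])
  have cc: "cnj c * c = of_real ((cmod c)\<^sup>2)" by (subst complex_norm_square) (rule mult.commute)
  have "cnj c * (c + inverse 2 * (1 - G * cnj G) * c * Pp - inverse 2 * N' * (G * a))
      = cnj c * c + of_real ((1 - (cmod G)\<^sup>2) / 2) * (cnj c * c) * Pp - inverse 2 * (cnj c * N' * G * a)"
    unfolding gg by (simp add: field_simps)
  also have "\<dots> = of_real ((cmod c)\<^sup>2) + of_real ((1 - (cmod G)\<^sup>2) / 2 * (cmod c)\<^sup>2) * Pp - inverse 2 * (cnj c * N' * G * a)"
    unfolding cc by simp
  finally have E: "Re (cnj c * (c + inverse 2 * (1 - G * cnj G) * c * Pp - inverse 2 * N' * (G * a)))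
      = (cmod c)\<^sup>2 + (1 - (cmod G)\<^sup>2) / 2 * (cmod c)\<^sup>2 * Re Pp - Re (cnj c * N' * G * a) / 2"
    by simp
  have nN: "cmod N' \<le> 2 * cmod G * cmod d"
  proof -
    have "cmod N' \<le> cmod (G * cnj d) + cmod (d * cnj G)" unfolding N'_def by (rule norm_triangle_ineq)
    also have "\<dots> = 2 * cmod G * cmod d" by (simp add: norm_mult)
    finally show ?thesis .
  qed
  have dn: "cmod d * cmod a = cmod c" using da by (metis norm_mult)
  have "Re (cnj c * N' * G * a) \<le> cmod (cnj c * N' * G * a)" by (rule complex_Re_le_cmod)
  also have "\<dots> = cmod c * cmod N' * cmod G * cmod a" by (simp add: norm_mult)
  also have "\<dots> \<le> cmod c * (2 * cmod G * cmod d) * cmod G * cmod a"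
    by (intro mult_right_mono mult_left_mono nN) auto
  also have "\<dots> = 2 * (cmod c) * (cmod G)\<^sup>2 * (cmod d * cmod a)" by (simp add: power2_eq_square)
  also have "\<dots> = 2 * (cmod c)\<^sup>2 * (cmod G)\<^sup>2" unfolding dn by (simp add: power2_eq_square)
  finally have B: "Re (cnj c * N' * G * a) \<le> 2 * (cmod c)\<^sup>2 * (cmod G)\<^sup>2" .
  have G2: "(cmod G)\<^sup>2 < 1" using G by (simp add: power_less_one_iff)
  have c2: "0 < (cmod c)\<^sup>2" using c by simp
  have "0 \<le> (1 - (cmod G)\<^sup>2) / 2 * (cmod c)\<^sup>2 * Re Pp"
    using G2 c2 P unfolding Pp_def by (intro mult_nonneg_nonneg) auto
  moreover have "0 < (cmod c)\<^sup>2 - (cmod c)\<^sup>2 * (cmod G)\<^sup>2" using G2 c2 by (simp add: algebra_simps)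
  ultimately have "0 < (cmod c)\<^sup>2 + (1 - (cmod G)\<^sup>2) / 2 * (cmod c)\<^sup>2 * Re Pp - Re (cnj c * N' * G * a) / 2"
    using B by linarith
  then show ?thesis using X E unfolding N'_def by simp
qed


context cvx begin

lemma u_inj:
  assumes u: "\<And>z. z \<in> ball 0 1 \<Longrightarrow> u z = h z + complex_of_real ((1 - (cmod z)\<^sup>2) / 2) * z * deriv h z"
  shows "inj_on u (ball 0 1)"
proof (rule inj_onI)
  fix z1 z2 :: complex assume z: "z1 \<in> ball 0 1" "z2 \<in> ball 0 1" "u z1 = u z2"
  show "z1 = z2"
  proof (rule ccontr)
    assume ne: "z1 \<noteq> z2"
    define R where "R = (max (cmod z1) (cmod z2) + 1) / 2"
    have ma: "0 \<le> max (cmod z1) (cmod z2)" by (simp add: le_max_iff_disj)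
    have mb: "max (cmod z1) (cmod z2) < 1" using z by simp
    have R: "0 < R" "R < 1" unfolding R_def using ma mb by (auto intro: add_nonneg_pos)
    define S where "S = ball (0::complex) R"
    have zS: "z1 \<in> S" "z2 \<in> S" using z unfolding S_def R_def by (auto simp: max_def)
    have SS: "S \<subseteq> ball 0 1" using R unfolding S_def by auto
    have inj: "inj_on h S" unfolding S_def by (rule conv_inj(1)[OF R])
    define g where "g = inv_into S h"
    have gh: "\<And>z. z \<in> S \<Longrightarrow> g (h z) = z" unfolding g_def using inj by (simp add: inv_into_f_f)
    define c where "c = h z2 - h z1"
    have cnz: "c \<noteq> 0" unfolding c_def using inj zS ne by (auto dest: inj_onD)
    define L where "L = (\<lambda>t::real. h z1 + of_real t * c)"
    define \<Gamma> where "\<Gamma> = (\<lambda>t. g (L t))"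
    have \<Gamma>S: "\<Gamma> t \<in> S \<and> h (\<Gamma> t) = L t" if t01: "t \<in> {0..1}" for t
    proof -
      obtain y where y: "y \<in> S" "h y = (1 - of_real t) * h z1 + of_real t * h z2"
        using conv_inj(2)[OF R, of z1 z2 t] zS t01 unfolding S_def by auto
      have "h y = L t" unfolding y(2) L_def c_def by (simp add: algebra_simps)
      then have "\<Gamma> t = y" unfolding \<Gamma>_def using gh[OF y(1)] by simp
      then show ?thesis using y(1) \<open>h y = L t\<close> by simp
    qed
    have \<Gamma>0: "\<Gamma> 0 = z1" unfolding \<Gamma>_def L_def using gh[OF zS(1)] by simp
    have \<Gamma>1: "\<Gamma> 1 = z2" unfolding \<Gamma>_def L_def c_def using gh[OF zS(2)] by simp
    have \<Gamma>b: "\<Gamma> t \<in> ball 0 1" if "t \<in> {0..1}" for t using \<Gamma>S[OF that] SS by auto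
    have \<Gamma>D: "(\<Gamma> has_vector_derivative c * inverse (deriv h (\<Gamma> t))) (at t)" if "t \<in> {0..1}" for t
    proof -
      have LD: "(L has_vector_derivative c) (at t)"
      proof -
        have "((\<lambda>x. h z1 + x * c) has_field_derivative c) (at (of_real t))"
          by (auto intro!: derivative_eq_intros)
        from has_vector_derivative_real_field[OF this] show ?thesis unfolding L_def by simp
      qed
      have gD: "(g has_field_derivative inverse (deriv h (g (L t)))) (at (L t))"
      proof (rule has_field_derivative_inverse_strong_x[of h _ g "L t" S])
        show "(h has_field_derivative deriv h (g (L t))) (at (g (L t)))"
          using hD \<Gamma>b[OF that] unfolding \<Gamma>_def by simp
        show "deriv h (g (L t)) \<noteq> 0" using nz \<Gamma>b[OF that] unfolding \<Gamma>_def by simp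
        show "open S" unfolding S_def by simp
        show "continuous_on S h" using holomorphic_on_imp_continuous_on[OF hol] SS by (rule continuous_on_subset)
        show "g (L t) \<in> S" using \<Gamma>S[OF that] unfolding \<Gamma>_def by simp
        show "h (g (L t)) = L t" using \<Gamma>S[OF that] unfolding \<Gamma>_def by simp
        show "\<And>z. z \<in> S \<Longrightarrow> g (h z) = z" by (rule gh)
      qed
      from field_vector_diff_chain_at[OF LD gD] show ?thesis unfolding \<Gamma>_def comp_def by simp
    qed
    define d where "d = (\<lambda>t. c * inverse (deriv h (\<Gamma> t)))"
    define N where "N = (\<lambda>t. \<Gamma> t * cnj (\<Gamma> t))"
    define M where "M = (\<lambda>t. \<Gamma> t * deriv h (\<Gamma> t))"
    define V where "V = (\<lambda>t. h (\<Gamma> t) + inverse 2 * ((1 - N t) * M t))"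
    define V' where "V' = (\<lambda>t. d t * deriv h (\<Gamma> t) + inverse 2 * ((1 - N t) * (\<Gamma> t * (d t * deriv (deriv h) (\<Gamma> t)) + d t * deriv h (\<Gamma> t))
           + (0 - (\<Gamma> t * cnj (d t) + d t * cnj (\<Gamma> t))) * M t))"
    have VD: "(V has_vector_derivative V' t) (at t)" if "t \<in> {0..1}" for t
    proof -
      have GD: "(\<Gamma> has_vector_derivative d t) (at t)" unfolding d_def by (rule \<Gamma>D[OF that])
      have hG: "((\<lambda>t. h (\<Gamma> t)) has_vector_derivative d t * deriv h (\<Gamma> t)) (at t)"
        using field_vector_diff_chain_at[OF GD hD[OF \<Gamma>b[OF that]]] unfolding comp_def .
      have h1G: "((\<lambda>t. deriv h (\<Gamma> t)) has_vector_derivative d t * deriv (deriv h) (\<Gamma> t)) (at t)"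
        using field_vector_diff_chain_at[OF GD h1D[OF \<Gamma>b[OF that]]] unfolding comp_def .
      have ND: "(N has_vector_derivative \<Gamma> t * cnj (d t) + d t * cnj (\<Gamma> t)) (at t)"
        unfolding N_def by (rule has_vector_derivative_mult[OF GD has_vector_derivative_cnj[OF GD]])
      have MD: "(M has_vector_derivative \<Gamma> t * (d t * deriv (deriv h) (\<Gamma> t)) + d t * deriv h (\<Gamma> t)) (at t)"
        unfolding M_def by (rule has_vector_derivative_mult[OF GD h1G])
      have N1D: "((\<lambda>t. 1 - N t) has_vector_derivative 0 - (\<Gamma> t * cnj (d t) + d t * cnj (\<Gamma> t))) (at t)"
        by (rule has_vector_derivative_diff[OF has_vector_derivative_const ND])
      have PD: "((\<lambda>t. (1 - N t) * M t) has_vector_derivative (1 - N t) * (\<Gamma> t * (d t * deriv (deriv h) (\<Gamma> t)) + d t * deriv h (\<Gamma> t))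
           + (0 - (\<Gamma> t * cnj (d t) + d t * cnj (\<Gamma> t))) * M t) (at t)"
        by (rule has_vector_derivative_mult[OF N1D MD])
      show ?thesis unfolding V_def V'_def
        by (rule has_vector_derivative_add[OF hG has_vector_derivative_mult_right[OF PD]])
    qed
    have V'pos: "0 < Re (cnj c * V' t)" if "t \<in> {0..1}" for t
    proof -
      have a: "deriv h (\<Gamma> t) \<noteq> 0" using nz \<Gamma>b[OF that] by simp
      have G: "cmod (\<Gamma> t) < 1" using \<Gamma>b[OF that] by simp
      have P: "0 < Re (1 + \<Gamma> t * deriv (deriv h) (\<Gamma> t) / deriv h (\<Gamma> t))" using pos \<Gamma>b[OF that] by simp
      show ?thesis using key_ineq[OF a cnz G P] unfolding V'_def d_def M_def N_def .
    qed
    define \<phi> where "\<phi> = (\<lambda>t. Re (cnj c * V t))"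
    have \<phi>D: "(\<phi> has_real_derivative Re (cnj c * V' t)) (at t)" if "t \<in> {0..1}" for t
      unfolding \<phi>_def by (intro vd_Re has_vector_derivative_mult_right VD that)
    obtain \<xi> where \<xi>: "0 < \<xi>" "\<xi> < 1" "\<phi> 1 - \<phi> 0 = (1 - 0) * Re (cnj c * V' \<xi>)"
      using MVT2[of 0 1 \<phi> "\<lambda>t. Re (cnj c * V' t)"] \<phi>D by auto
    have "0 < \<phi> 1 - \<phi> 0" using \<xi> V'pos[of \<xi>] by simp
    moreover have "V t = u (\<Gamma> t)" if "t \<in> {0..1}" for t
    proof -
      have "u (\<Gamma> t) = h (\<Gamma> t) + complex_of_real ((1 - (cmod (\<Gamma> t))\<^sup>2) / 2) * \<Gamma> t * deriv h (\<Gamma> t)"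
        by (rule u[OF \<Gamma>b[OF that]])
      also have "complex_of_real ((1 - (cmod (\<Gamma> t))\<^sup>2) / 2) = inverse 2 * (1 - N t)"
        unfolding N_def complex_norm_square[symmetric] by (simp add: field_simps)
      finally show ?thesis unfolding V_def M_def by (simp add: field_simps)
    qed
    ultimately have "0 < Re (cnj c * u z2) - Re (cnj c * u z1)"
      unfolding \<phi>_def using \<Gamma>0 \<Gamma>1 by simp
    then show False using z(3) by simp
  qed
qed

end


theorem theorem2:
  fixes \<alpha> :: real and h u :: "complex \<Rightarrow> complex"
  assumes "0 \<le> \<alpha>" and "\<alpha> < 1"
    and "convex_of_order \<alpha> h"
    and "\<And>z. z \<in> ball 0 1 \<Longrightarrow>
           u z = h z + complex_of_real ((1 - (cmod z)\<^sup>2) / 2) * z * deriv h z"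
  shows "(1/2 \<le> \<alpha> \<longrightarrow> inj_on u (ball 0 1)) \<and>
         (\<alpha> < 1/2 \<longrightarrow>
            inj_on u (ball 0 ((- (1 - \<alpha>) + sqrt ((1 - \<alpha>)\<^sup>2 + 1 - 2 * \<alpha>)) / (1 - 2 * \<alpha>))))"
proof -
  have c: "h holomorphic_on ball 0 1" "\<And>z. z \<in> ball 0 1 \<Longrightarrow> deriv h z \<noteq> 0"
      "\<And>z. z \<in> ball 0 1 \<Longrightarrow> 0 < Re (1 + z * deriv (deriv h) z / deriv h z)"
    using assms(1,3) unfolding convex_of_order_def by (auto intro: le_less_trans)
  interpret cvx h using c by unfold_locales auto
  have I: "inj_on u (ball 0 1)" by (rule u_inj) (rule assms(4))
  show ?thesis
  proof (intro conjI impI)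
    show "inj_on u (ball 0 1)" by (rule I)
  next
    assume a: "\<alpha> < 1/2"
    define r where "r = (- (1 - \<alpha>) + sqrt ((1 - \<alpha>)\<^sup>2 + 1 - 2 * \<alpha>)) / (1 - 2 * \<alpha>)"
    have "(1 - \<alpha>)\<^sup>2 + 1 - 2 * \<alpha> \<le> (2 - 3 * \<alpha>)\<^sup>2"
    proof -
      have "(2 - 3 * \<alpha>)\<^sup>2 - ((1 - \<alpha>)\<^sup>2 + 1 - 2 * \<alpha>) = 2 * (1 - 2 * \<alpha>)\<^sup>2"
        by (simp add: power2_eq_square algebra_simps)
      then show ?thesis by (smt (verit) zero_le_power2)
    qed
    then have "sqrt ((1 - \<alpha>)\<^sup>2 + 1 - 2 * \<alpha>) \<le> sqrt ((2 - 3 * \<alpha>)\<^sup>2)" by (rule real_sqrt_le_mono)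
    also have "\<dots> = 2 - 3 * \<alpha>" using a by simp
    finally have "- (1 - \<alpha>) + sqrt ((1 - \<alpha>)\<^sup>2 + 1 - 2 * \<alpha>) \<le> 1 - 2 * \<alpha>" by simp
    then have "r \<le> 1" unfolding r_def using a by (simp add: divide_le_eq)
    then have "ball 0 r \<subseteq> ball (0::complex) 1" by auto
    from inj_on_subset[OF I this] show "inj_on u (ball 0 ((- (1 - \<alpha>) + sqrt ((1 - \<alpha>)\<^sup>2 + 1 - 2 * \<alpha>)) / (1 - 2 * \<alpha>)))"
      unfolding r_def .
  qed
qed


end
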